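(* Let $f\in A[X]$ be monic with discriminant $\Delta=\mathrm{Res}_X(f,f')\neq 0$, and let $r=v(\Delta)$. Then the number of roots of $f$ in $K$ is at most $q^{\lfloor r/2\rfloor+1}$.
   Context: $K$ is a field complete with respect to a non-archimedean discrete valuation $v$, normalized by $v(\pi)=1$ for a uniformizer $\pi$ of the valuation ring $A=\{x\in K: v(x)\geq 0\}$; the residue field $A/\pi A$ is finite with $q$ elements. *)

theory Defs
  imports "HOL-Computational_Algebra.Polynomial" "Subresultants.Resultant_Prelim"
begin

text \<open>A discrete valuation on a field, given on nonzero elements (v 0 is irrelevant,
  morally +infinity), normalized so that some element (a uniformizer) has valuation 1.\<close>
definition normalized_discrete_valuation :: "('a::field \<Rightarrow> int) \<Rightarrow> bool" where
  "normalized_discrete_valuation v \<longleftrightarrow>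
     (\<forall>x y. x \<noteq> 0 \<longrightarrow> y \<noteq> 0 \<longrightarrow> v (x * y) = v x + v y) \<and>
     (\<forall>x y. x \<noteq> 0 \<longrightarrow> y \<noteq> 0 \<longrightarrow> x + y \<noteq> 0 \<longrightarrow> v (x + y) \<ge> min (v x) (v y)) \<and>
     (\<exists>\<pi>. \<pi> \<noteq> 0 \<and> v \<pi> = 1)"

definition val_ring :: "('a::field \<Rightarrow> int) \<Rightarrow> 'a set" where
  "val_ring v = {x. x = 0 \<or> 0 \<le> v x}"

definition val_complete :: "('a::field \<Rightarrow> int) \<Rightarrow> bool" where
  "val_complete v \<longleftrightarrow>
     (\<forall>s :: nat \<Rightarrow> 'a.
        (\<forall>n::int. \<exists>N. \<forall>m\<ge>N. \<forall>k\<ge>N. s m = s k \<or> v (s m - s k) \<ge> n) \<longrightarrow>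
        (\<exists>L. \<forall>n::int. \<exists>N. \<forall>m\<ge>N. s m = L \<or> v (s m - L) \<ge> n))"

text \<open>The residue field A / \<pi>A: classes of A modulo the relation x - y \<in> \<pi>A,
  i.e. x = y or v (x - y) \<ge> 1.\<close>
definition residue_rel :: "('a::field \<Rightarrow> int) \<Rightarrow> ('a \<times> 'a) set" where
  "residue_rel v = {(x, y). x \<in> val_ring v \<and> y \<in> val_ring v \<and> (x = y \<or> 1 \<le> v (x - y))}"

definition residue_field :: "('a::field \<Rightarrow> int) \<Rightarrow> 'a set set" where
  "residue_field v = val_ring v // residue_rel v"

end

theory Submission
  imports Defs
begin



lemma sdiv_add: "synthetic_div (p + q) c = synthetic_div p c + synthetic_div (q::'a::comm_ring_1 poly) c"
proof -
  have "(p + q) + smult c (synthetic_div p c + synthetic_div q c)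
      = pCons (poly p c + poly q c) (synthetic_div p c + synthetic_div q c)"
  proof -
    have "(p + q) + smult c (synthetic_div p c + synthetic_div q c)
      = (p + smult c (synthetic_div p c)) + (q + smult c (synthetic_div q c))"
      by (simp add: smult_add_right algebra_simps)
    also have "\<dots> = pCons (poly p c) (synthetic_div p c) + pCons (poly q c) (synthetic_div q c)"
      using synthetic_div_correct[of p c] synthetic_div_correct[of q c] by simp
    finally show ?thesis by simp
  qed
  from synthetic_div_unique[OF this] show ?thesis by simp
qed

lemma sdiv_smult: "synthetic_div (smult a p) c = smult a (synthetic_div (p::'a::comm_ring_1 poly) c)"
proof -
  have "smult a p + smult c (smult a (synthetic_div p c))
      = pCons (a * poly p c) (smult a (synthetic_div p c))"
    using arg_cong[OF synthetic_div_correct[of p c], of "smult a"]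
    by (simp add: smult_add_right algebra_simps)
  from synthetic_div_unique[OF this] show ?thesis by simp
qed

lemma sdiv_sum: "finite S \<Longrightarrow> synthetic_div (sum f S) c = (\<Sum>i\<in>S. synthetic_div (f i :: 'a::comm_ring_1 poly) c)"
  by (induct S rule: finite_induct) (auto simp: sdiv_add)

lemma sdiv_linear: "synthetic_div ([:-c, 1:] * W) c = (W :: 'a::comm_ring_1 poly)"
  and poly_linear: "poly ([:-c, 1:] * W) c = 0"
proof -
  have "[:-c, 1:] * W + smult c W = pCons 0 W" by (simp add: algebra_simps)
  from synthetic_div_unique[OF this] show "synthetic_div ([:-c, 1:] * W) c = W" by simp
  show "poly ([:-c, 1:] * W) c = 0" by simp
qed

lemma sdiv_lead: "degree p \<ge> 1 \<Longrightarrow> coeff (synthetic_div p c) (degree p - 1) = coeff (p::'a::comm_ring_1 poly) (degree p)"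
proof (induct p)
  case 0 then show ?case by simp
next
  case (pCons a q)
  show ?case
  proof (cases "q = 0")
    case True then show ?thesis using pCons by simp
  next
    case False
    then have dp: "degree (pCons a q) = Suc (degree q)" by simp
    show ?thesis
    proof (cases "degree q = 0")
      case True
      then obtain b where "q = [:b:]" by (metis degree_eq_zeroE)
      then show ?thesis using dp by simp
    next
      case False
      then show ?thesis using pCons dp by (cases "degree q") auto
    qed
  qed
qed

lemma sylv_row:
  fixes p q :: "'a::comm_ring_1 poly"
  assumes "i < degree p + degree q" "j < degree p + degree q"
  shows "sylvester_mat p q $$ (i,j) = coeff (if i < degree q then monom 1 (degree q - 1 - i) * p
     else monom 1 (degree p + degree q - 1 - i) * q) (degree p + degree q - 1 - j)"
  using assms
  by (auto simp: sylvester_index_mat coeff_monom_mult coeff_eq_0)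

lemma res_linear_factor:
  fixes P G :: "'a::idom poly"
  assumes P0: "P \<noteq> 0"
  shows "resultant ([:-a,1:] * P) G = poly G a * resultant P G"
proof -
  define F where "F = [:-a,1:] * P"
  define n where "n = degree P"
  define m where "m = degree G"
  define N where "N = Suc (n + m)"
  have nz: "[:-a,1::'a:] \<noteq> 0" by simp
  have d1: "degree [:-a,1::'a:] = 1" by simp
  have dF: "degree F = Suc n" unfolding F_def n_def degree_mult_eq[OF nz P0] d1 by simp
  define S where "S = sylvester_mat F G"
  have Sc: "S \<in> carrier_mat N N" unfolding S_def N_def using dF m_def by (simp add: carrier_matI)
  define \<rho> where "\<rho> i = (if i < m then monom 1 (m - 1 - i) * F else monom 1 (N - 1 - i) * G)" for i
  have Sij: "S $$ (i,j) = coeff (\<rho> i) (N - 1 - j)" if "i < N" "j < N" for i j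
    using sylv_row[of i F G j] that unfolding S_def \<rho>_def N_def m_def dF by simp
  have deg\<rho>: "degree (\<rho> i) < N" if "i < N" for i
  proof (cases "i < m")
    case True
    have "degree (\<rho> i) \<le> (m - 1 - i) + degree F" unfolding \<rho>_def using True
      degree_mult_le[of "monom (1::'a) (m-1-i)" F] by (simp add: degree_monom_eq)
    then show ?thesis using True dF N_def by linarith
  next
    case False
    have "degree (\<rho> i) \<le> (N - 1 - i) + degree G" unfolding \<rho>_def using False
      degree_mult_le[of "monom (1::'a) (N-1-i)" G] by (simp add: degree_monom_eq)
    then show ?thesis using False that m_def N_def by linarith
  qed
  define \<phi> where "\<phi> j Q = (if j < N - 1 then coeff (synthetic_div Q a) (N - 2 - j) else poly Q a)" for j Q
  have phi_diff: "\<phi> j (Q1 - smult b Q2) = \<phi> j Q1 - b * \<phi> j Q2" for j Q1 Q2 b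
  proof -
    have e: "Q1 - smult b Q2 = Q1 + smult (-b) Q2" by simp
    show ?thesis unfolding \<phi>_def e sdiv_add sdiv_smult by simp
  qed
  have phi_lin: "\<phi> j (W * [:-a,1:]) = (if j < N - 1 then coeff W (N - 2 - j) else 0)" for j W
    using sdiv_linear[of a W] poly_linear[of a W] unfolding \<phi>_def by (simp add: mult.commute)
  define T where "T = mat N N (\<lambda>(l,j). \<phi> j (monom 1 (N - 1 - l)))"
  have Tc: "T \<in> carrier_mat N N" unfolding T_def by simp
  have phi_sum: "(\<Sum>l<N. coeff Q (N - 1 - l) * \<phi> j (monom 1 (N - 1 - l))) = \<phi> j Q"
    if "degree Q < N" for Q j
  proof -
    have "(\<Sum>l<N. coeff Q (N - 1 - l) * \<phi> j (monom 1 (N - 1 - l)))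
        = (\<Sum>k<N. coeff Q k * \<phi> j (monom 1 k))"
      using sum.nat_diff_reindex[of "\<lambda>k. coeff Q k * \<phi> j (monom 1 k)" N] by simp
    moreover have Qs: "Q = (\<Sum>k<N. smult (coeff Q k) (monom 1 k))"
    proof -
      have "(\<Sum>k\<le>N - 1. monom (coeff Q k) k) = Q"
        by (rule poly_as_sum_of_monoms') (use that in linarith)
      moreover have "{..N - 1} = {..<N}" using that by auto
      ultimately show ?thesis by (simp add: smult_monom)
    qed
    moreover have "\<phi> j (\<Sum>k<N. smult (coeff Q k) (monom 1 k)) = (\<Sum>k<N. coeff Q k * \<phi> j (monom 1 k))"
      unfolding \<phi>_def by (auto simp: sdiv_sum sdiv_smult coeff_sum poly_sum)
    ultimately show ?thesis by metis
  qed
  have STij: "(S * T) $$ (i,j) = \<phi> j (\<rho> i)" if "i < N" "j < N" for i j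
  proof -
    have "(S * T) $$ (i,j) = (\<Sum>l<N. S $$ (i,l) * T $$ (l,j))"
      using Sc Tc that by (simp add: scalar_prod_def lessThan_atLeast0)
    also have "\<dots> = (\<Sum>l<N. coeff (\<rho> i) (N - 1 - l) * \<phi> j (monom 1 (N - 1 - l)))"
      by (rule sum.cong) (use that in \<open>auto simp: Sij T_def\<close>)
    also have "\<dots> = \<phi> j (\<rho> i)" by (rule phi_sum[OF deg\<rho>[OF that(1)]])
    finally show ?thesis .
  qed
  have detT: "det T = 1"
  proof -
    have ut: "upper_triangular T"
    proof (rule upper_triangularI)
      fix l j assume jl: "j < l" and l: "l < dim_row T"
      then have lN: "l < N" unfolding T_def by simp
      have "coeff (synthetic_div (monom 1 (N - 1 - l) :: 'a poly) a) (N - 2 - j) = 0"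
      proof (cases "N - 1 - l = 0")
        case True
        have "synthetic_div (1::'a poly) a = 0" by (simp add: synthetic_div_eq_0_iff)
        then show ?thesis using True by simp
      next
        case False
        have "degree (synthetic_div (monom 1 (N - 1 - l) :: 'a poly) a) < N - 2 - j"
          using jl lN False by (simp add: degree_synthetic_div degree_monom_eq)
        then show ?thesis by (simp add: coeff_eq_0)
      qed
      then show "T $$ (l, j) = 0" using jl lN unfolding T_def \<phi>_def by simp
    qed
    have "det T = prod_list (diag_mat T)" by (rule det_upper_triangular[OF ut Tc])
    also have "\<dots> = (\<Prod>i = 0..<N. T $$ (i,i))" using Tc by (simp add: prod_list_diag_prod)
    also have "\<dots> = (\<Prod>i = 0..<N. 1)"
    proof (rule prod.cong[OF refl])
      fix i assume "i \<in> {0..<N}"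
      then have iN: "i < N" by simp
      show "T $$ (i,i) = 1"
      proof (cases "i < N - 1")
        case True
        have "coeff (synthetic_div (monom 1 (N - 1 - i) :: 'a poly) a) (degree (monom (1::'a) (N - 1 - i)) - 1)
          = coeff (monom (1::'a) (N - 1 - i)) (degree (monom (1::'a) (N - 1 - i)))"
          by (rule sdiv_lead) (use True in \<open>simp add: degree_monom_eq\<close>)
        then show ?thesis using True iN unfolding T_def \<phi>_def by (simp add: degree_monom_eq)
      next
        case False
        then have "i = N - 1" using iN by simp
        then show ?thesis using iN unfolding T_def \<phi>_def by simp
      qed
    qed
    finally show ?thesis by simp
  qed
  define L :: "'a mat" where "L = mat N N (\<lambda>(i,k). if k = i then 1 else if m \<le> i \<and> Suc i < N \<and> k = Suc i then -a else 0)"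
  have Lc: "L \<in> carrier_mat N N" unfolding L_def by simp
  have detL: "det L = 1"
  proof -
    have ut: "upper_triangular L"
      by (rule upper_triangularI) (auto simp: L_def)
    have "det L = prod_list (diag_mat L)" by (rule det_upper_triangular[OF ut Lc])
    also have "\<dots> = (\<Prod>i = 0..<N. L $$ (i,i))" using Lc by (simp add: prod_list_diag_prod)
    also have "\<dots> = (\<Prod>i = 0..<N. 1)" by (rule prod.cong) (auto simp: L_def)
    finally show ?thesis by simp
  qed
  have LR: "(L * R) $$ (i,j) = (if m \<le> i \<and> Suc i < N then R $$ (i,j) - a * R $$ (Suc i, j) else R $$ (i,j))"
    if R: "R \<in> carrier_mat N N" and ij: "i < N" "j < N" for R i j
  proof -
    have "(L * R) $$ (i,j) = (\<Sum>k<N. L $$ (i,k) * R $$ (k,j))"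
      using Lc R ij by (simp add: scalar_prod_def lessThan_atLeast0)
    also have "\<dots> = (\<Sum>k<N. (if k = i then R $$ (k,j) else 0) +
       (if m \<le> i \<and> Suc i < N \<and> k = Suc i then - a * R $$ (k,j) else 0))"
      by (rule sum.cong) (use ij in \<open>auto simp: L_def\<close>)
    also have "\<dots> = (if m \<le> i \<and> Suc i < N then R $$ (i,j) - a * R $$ (Suc i, j) else R $$ (i,j))"
      using ij by (cases "m \<le> i \<and> Suc i < N") (auto simp: sum.distrib sum.delta intro!: sum.neutral)
    finally show ?thesis .
  qed
  define M where "M = L * (S * T)"
  have STc: "S * T \<in> carrier_mat N N" using Sc Tc by simp
  have Mc: "M \<in> carrier_mat N N" unfolding M_def using Lc STc by simp
  define \<rho>' where "\<rho>' i = (if i < m then monom 1 (m - 1 - i) * P else monom 1 (N - 2 - i) * G)" for i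
  have Mij: "M $$ (i,j) = (if i < N - 1 then (if j < N - 1 then coeff (\<rho>' i) (N - 2 - j) else 0) else \<phi> j G)"
    if ij: "i < N" "j < N" for i j
  proof -
    have M1: "M $$ (i,j) = (if m \<le> i \<and> Suc i < N then \<phi> j (\<rho> i) - a * \<phi> j (\<rho> (Suc i)) else \<phi> j (\<rho> i))"
      unfolding M_def LR[OF STc ij] using ij by (simp add: STij)
    consider (F) "i < m" | (G) "m \<le> i" "Suc i < N" | (L) "i = N - 1" using ij by linarith
    then show ?thesis
    proof cases
      case F
      have "\<rho> i = monom 1 (m - 1 - i) * ([:-a,1:] * P)" unfolding \<rho>_def F_def using F by simp
      also have "\<dots> = (monom 1 (m - 1 - i) * P) * [:-a,1:]" by (metis mult.assoc mult.commute)
      finally have "\<rho> i = (monom 1 (m - 1 - i) * P) * [:-a,1:]" .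
      have "M $$ (i,j) = \<phi> j (\<rho> i)" using M1 F by simp
      also have "\<dots> = (if j < N - 1 then coeff (monom 1 (m - 1 - i) * P) (N - 2 - j) else 0)"
        unfolding \<open>\<rho> i = (monom 1 (m - 1 - i) * P) * [:-a,1:]\<close> by (rule phi_lin)
      finally show ?thesis using F N_def by (simp add: \<rho>'_def)
    next
      case G
      have eq: "N - 1 - i = Suc (N - 2 - i)" "N - 1 - Suc i = N - 2 - i" "N - Suc i = Suc (N - Suc (Suc i))" using G by auto
      have "\<rho> i - smult a (\<rho> (Suc i)) = (monom 1 (N - 2 - i) * G) * [:-a,1:]"
        unfolding \<rho>_def using G by (simp add: eq monom_Suc algebra_simps)
      then have "\<phi> j (\<rho> i) - a * \<phi> j (\<rho> (Suc i)) = \<phi> j ((monom 1 (N - 2 - i) * G) * [:-a,1:])"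
        using phi_diff[of j "\<rho> i" a "\<rho> (Suc i)"] by simp
      also have "\<dots> = (if j < N - 1 then coeff (monom 1 (N - 2 - i) * G) (N - 2 - j) else 0)"
        by (rule phi_lin)
      finally have "\<phi> j (\<rho> i) - a * \<phi> j (\<rho> (Suc i)) = (if j < N - 1 then coeff (monom 1 (N - 2 - i) * G) (N - 2 - j) else 0)" .
      then show ?thesis using G M1 by (simp add: \<rho>'_def)
    next
      case L
      then have "\<rho> i = G" unfolding \<rho>_def N_def by simp
      then show ?thesis using L M1 N_def by simp
    qed
  qed
  have "det S = det M"
    unfolding M_def det_mult[OF Lc STc] det_mult[OF Sc Tc] detL detT by simp
  also have "det M = (\<Sum>i<N. M $$ (i, N - 1) * cofactor M i (N - 1))"
    by (rule laplace_expansion_column[OF Mc]) (simp add: N_def)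
  also have "\<dots> = (\<Sum>i<N. if i = N - 1 then poly G a * cofactor M (N - 1) (N - 1) else 0)"
    by (rule sum.cong) (auto simp: Mij \<phi>_def N_def)
  also have "\<dots> = poly G a * cofactor M (N - 1) (N - 1)" by (simp add: N_def)
  also have "cofactor M (N - 1) (N - 1) = det (mat_delete M (N - 1) (N - 1))"
    unfolding cofactor_def by simp
  also have "mat_delete M (N - 1) (N - 1) = sylvester_mat P G"
  proof (rule eq_matI)
    show "dim_row (mat_delete M (N - 1) (N - 1)) = dim_row (sylvester_mat P G)"
      "dim_col (mat_delete M (N - 1) (N - 1)) = dim_col (sylvester_mat P G)"
      using Mc by (auto simp: N_def n_def m_def)
    fix i j assume "i < dim_row (sylvester_mat P G)" "j < dim_col (sylvester_mat P G)"
    then have ij: "i < n + m" "j < n + m" by (auto simp: n_def m_def)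
    have "mat_delete M (N - 1) (N - 1) $$ (i,j) = M $$ (i,j)"
      using ij Mc by (simp add: mat_delete_def N_def)
    also have "\<dots> = coeff (\<rho>' i) (N - 2 - j)" using ij by (simp add: Mij N_def)
    also have "\<dots> = sylvester_mat P G $$ (i,j)"
      using sylv_row[of i P G j] ij unfolding \<rho>'_def n_def m_def N_def by simp
    finally show "mat_delete M (N - 1) (N - 1) $$ (i,j) = sylvester_mat P G $$ (i,j)" .
  qed
  finally show ?thesis unfolding resultant_def S_def F_def .
qed





context
  fixes v :: "'a::field \<Rightarrow> int"
  assumes nv: "normalized_discrete_valuation v"
begin

lemma vmult: "x \<noteq> 0 \<Longrightarrow> y \<noteq> 0 \<Longrightarrow> v (x * y) = v x + v y"
  using nv unfolding normalized_discrete_valuation_def by blast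

lemma vadd: "x \<noteq> 0 \<Longrightarrow> y \<noteq> 0 \<Longrightarrow> x + y \<noteq> 0 \<Longrightarrow> v (x + y) \<ge> min (v x) (v y)"
  using nv unfolding normalized_discrete_valuation_def by blast

lemma vone: "v 1 = 0"
  using vmult[of 1 1] by simp

lemma vm1: "v (-1) = 0"
proof -
  have "v 1 = v (-1) + v (-1)" using vmult[of "-1" "-1"] by simp
  then show ?thesis using vone by simp
qed

lemma vneg: "v (- x) = v x"
proof (cases "x = 0")
  case False
  then show ?thesis using vmult[of "-1" x] vm1 by simp
qed simp

lemma vpow: "x \<noteq> 0 \<Longrightarrow> v (x ^ n) = int n * v x"
  by (induct n) (auto simp: vone vmult algebra_simps)

lemma vsum: "finite S \<Longrightarrow> (\<forall>i\<in>S. f i = 0 \<or> k \<le> v (f i)) \<Longrightarrow> sum f S = 0 \<or> k \<le> v (sum f S)"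
proof (induct S rule: finite_induct)
  case (insert x F)
  then have h1: "f x = 0 \<or> k \<le> v (f x)" and h2: "sum f F = 0 \<or> k \<le> v (sum f F)" by auto
  show ?case
  proof (cases "f x = 0 \<or> sum f F = 0 \<or> f x + sum f F = 0")
    case True
    then show ?thesis using insert h1 h2 by auto
  next
    case False
    then have "v (f x + sum f F) \<ge> min (v (f x)) (v (sum f F))" by (intro vadd) auto
    then show ?thesis using insert False h1 h2 by auto
  qed
qed simp

lemma A_add: "x \<in> val_ring v \<Longrightarrow> y \<in> val_ring v \<Longrightarrow> x + y \<in> val_ring v"
  using vsum[of "{0::nat,1}" "\<lambda>i. if i = 0 then x else y" 0] unfolding val_ring_def by auto

lemma A_mult: "x \<in> val_ring v \<Longrightarrow> y \<in> val_ring v \<Longrightarrow> x * y \<in> val_ring v"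
  unfolding val_ring_def by (cases "x = 0"; cases "y = 0") (auto simp: vmult)

lemma A_neg: "x \<in> val_ring v \<Longrightarrow> - x \<in> val_ring v"
  unfolding val_ring_def by (auto simp: vneg)

lemma A_diff: "x \<in> val_ring v \<Longrightarrow> y \<in> val_ring v \<Longrightarrow> x - y \<in> val_ring v"
  using A_add[of x "-y"] A_neg[of y] by simp

lemma A_one: "1 \<in> val_ring v" and A_zero: "0 \<in> val_ring v"
  unfolding val_ring_def by (auto simp: vone)

lemma A_of_nat: "of_nat n \<in> val_ring v"
  by (induct n) (auto simp: A_zero A_one A_add)

lemma A_of_int: "of_int n \<in> val_ring v"
proof (cases "0 \<le> n")
  case True
  then have "(of_int n :: 'a) = of_nat (nat n)" by simp
  then show ?thesis by (simp add: A_of_nat)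
next
  case False
  then have "(of_int n :: 'a) = - of_nat (nat (- n))" by simp
  then show ?thesis by (simp add: A_of_nat A_neg)
qed

lemma A_sum: "(\<And>i. i \<in> S \<Longrightarrow> f i \<in> val_ring v) \<Longrightarrow> sum f S \<in> val_ring v"
  by (induct S rule: infinite_finite_induct) (auto simp: A_zero A_add)

lemma A_prod: "(\<And>i. i \<in> S \<Longrightarrow> f i \<in> val_ring v) \<Longrightarrow> prod f S \<in> val_ring v"
  by (induct S rule: infinite_finite_induct) (auto simp: A_one A_mult)

lemma A_pow: "x \<in> val_ring v \<Longrightarrow> x ^ n \<in> val_ring v"
  by (induct n) (auto simp: A_one A_mult)

lemma A_poly: "(\<And>i. coeff p i \<in> val_ring v) \<Longrightarrow> x \<in> val_ring v \<Longrightarrow> poly p x \<in> val_ring v"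
  unfolding poly_altdef by (intro A_sum A_mult A_pow) auto

lemma A_pderiv: "(\<And>i. coeff p i \<in> val_ring v) \<Longrightarrow> coeff (pderiv p) i \<in> val_ring v"
  unfolding coeff_pderiv by (intro A_mult A_of_nat)

lemma A_sdiv: "(\<And>i. coeff p i \<in> val_ring v) \<Longrightarrow> x \<in> val_ring v \<Longrightarrow> coeff (synthetic_div p x) i \<in> val_ring v"
proof (induct p arbitrary: i)
  case 0 then show ?case by (simp add: A_zero)
next
  case (pCons a p)
  have cp: "coeff p j \<in> val_ring v" for j using pCons(3)[of "Suc j"] by simp
  show ?case
  proof (cases i)
    case 0 then show ?thesis using A_poly[OF cp pCons(4)] by simp
  next
    case (Suc j) then show ?thesis using pCons(2)[OF cp pCons(4)] by simp
  qed
qed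

lemma A_det: "(\<And>i j. i < dim_row M \<Longrightarrow> j < dim_col M \<Longrightarrow> M $$ (i,j) \<in> val_ring v) \<Longrightarrow> det M \<in> val_ring v"
  unfolding det_def
  by (auto intro!: A_sum A_mult A_prod A_of_int A_zero simp: permutes_def)

lemma A_resultant: "(\<And>i. coeff p i \<in> val_ring v) \<Longrightarrow> (\<And>i. coeff q i \<in> val_ring v) \<Longrightarrow> resultant p q \<in> val_ring v"
  unfolding resultant_def
  by (rule A_det) (auto simp: sylvester_index_mat A_zero)

lemma vdiv: "x \<noteq> 0 \<Longrightarrow> y \<noteq> 0 \<Longrightarrow> v (x / y) = v x - v y"
  using vmult[of "x / y" y] by simp

lemma root_in_A:
  assumes cA: "\<And>i. coeff f i \<in> val_ring v" and mon: "monic f" and r: "poly f x = 0"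
  shows "x \<in> val_ring v"
proof (rule ccontr)
  assume nA: "x \<notin> val_ring v"
  then have x0: "x \<noteq> 0" and vx: "v x < 0" unfolding val_ring_def by auto
  define n where "n = degree f"
  have n0: "n \<noteq> 0"
  proof
    assume "n = 0"
    then have "f = [:1:]" using mon unfolding n_def by (metis degree_eq_zeroE lead_coeff_pCons(2) pCons_0_0)
    then show False using r by simp
  qed
  have "0 = (\<Sum>i\<le>n. coeff f i * x ^ i)" using r unfolding n_def poly_altdef by simp
  also have "\<dots> = (\<Sum>i<n. coeff f i * x ^ i) + x ^ n" using mon unfolding n_def
    by (simp add: lessThan_Suc_atMost[symmetric])
  finally have eq: "x ^ n = - (\<Sum>i<n. coeff f i * x ^ i)" by (simp add: eq_neg_iff_add_eq_0 add.commute)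
  have "(\<Sum>i<n. coeff f i * x ^ i) = 0 \<or> int n * v x + 1 \<le> v (\<Sum>i<n. coeff f i * x ^ i)"
  proof (rule vsum, simp, intro ballI)
    fix i assume i: "i \<in> {..<n}"
    show "coeff f i * x ^ i = 0 \<or> int n * v x + 1 \<le> v (coeff f i * x ^ i)"
    proof (cases "coeff f i = 0")
      case False
      then have "0 \<le> v (coeff f i)" using cA[of i] unfolding val_ring_def by auto
      moreover have "v (coeff f i * x ^ i) = v (coeff f i) + int i * v x"
        using False x0 by (simp add: vmult vpow)
      moreover have "int n * v x + 1 \<le> int i * v x"
      proof -
        have "int i \<le> int n - 1" using i by auto
        then have "(int n - 1) * v x \<le> int i * v x" using vx by (intro mult_right_mono_neg) auto
        then show ?thesis using vx by (simp add: algebra_simps)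
      qed
      ultimately show ?thesis by linarith
    qed simp
  qed
  moreover have "x ^ n \<noteq> 0" using x0 by simp
  ultimately have "int n * v x + 1 \<le> v (x ^ n)" using eq by (auto simp: vneg)
  then show False using vpow[OF x0, of n] by simp
qed

lemma two_roots_bound:
  assumes cA: "\<And>i. coeff f i \<in> val_ring v" and mon: "monic f"
    and D0: "resultant f (pderiv f) \<noteq> 0"
    and ra: "poly f a = 0" and rb: "poly f b = 0" and ab: "a \<noteq> b"
  shows "2 * v (a - b) \<le> v (resultant f (pderiv f))"
proof -
  have aA: "a \<in> val_ring v" and bA: "b \<in> val_ring v" using root_in_A[OF cA mon] ra rb by auto
  define h where "h = synthetic_div f a"
  have fh: "f = [:-a,1:] * h" using synthetic_div_correct'[of a f] ra unfolding h_def by simp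
  have hA: "coeff h i \<in> val_ring v" for i unfolding h_def by (rule A_sdiv[OF cA aA])
  have "poly f b = (b - a) * poly h b" unfolding fh by (simp add: algebra_simps)
  then have hb: "poly h b = 0" using rb ab by simp
  define g where "g = synthetic_div h b"
  have hg: "h = [:-b,1:] * g" using synthetic_div_correct'[of b h] hb unfolding g_def by simp
  have gA: "coeff g i \<in> val_ring v" for i unfolding g_def by (rule A_sdiv[OF hA bA])
  have f0: "f \<noteq> 0" using mon by auto
  then have h0: "h \<noteq> 0" using fh by auto
  then have g0: "g \<noteq> 0" using hg by auto
  define E where "E = resultant g (pderiv f)"
  have EA: "E \<in> val_ring v" unfolding E_def by (rule A_resultant[OF gA A_pderiv[OF cA]])
  have "resultant f (pderiv f) = poly (pderiv f) a * resultant h (pderiv f)"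
    unfolding fh by (rule res_linear_factor[OF h0])
  also have "resultant h (pderiv f) = poly (pderiv f) b * E"
    unfolding E_def hg by (rule res_linear_factor[OF g0])
  also have "poly (pderiv f) a = (a - b) * poly g a"
    unfolding fh hg pderiv_mult by (simp add: pderiv_pCons algebra_simps)
  also have "poly (pderiv f) b = (b - a) * poly g b"
    unfolding fh hg pderiv_mult by (simp add: pderiv_pCons algebra_simps)
  finally have eq: "resultant f (pderiv f) = - ((a - b) ^ 2 * (poly g a * poly g b * E))"
    by (simp add: algebra_simps power2_eq_square)
  define u where "u = poly g a * poly g b * E"
  have uA: "u \<in> val_ring v" unfolding u_def
    by (intro A_mult A_poly[OF gA] aA bA EA)
  have u0: "u \<noteq> 0" using D0 eq unfolding u_def by auto
  then have vu: "0 \<le> v u" using uA unfolding val_ring_def by auto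
  have "v (resultant f (pderiv f)) = v ((a - b) ^ 2) + v u"
    unfolding eq vneg u_def[symmetric] using ab u0 by (simp add: vmult)
  also have "v ((a - b) ^ 2) = 2 * v (a - b)" using ab by (simp add: vpow)
  finally show ?thesis using vu by simp
qed

end



theorem corollary3p3:
  fixes v :: "'a::field \<Rightarrow> int" and q :: nat and f :: "'a poly"
  assumes "normalized_discrete_valuation v"
    and "val_complete v"
    and "finite (residue_field v)" and "card (residue_field v) = q"
    and "\<forall>i. coeff f i \<in> val_ring v"
    and "monic f"
    and "resultant f (pderiv f) \<noteq> 0"
  shows "card {x. poly f x = 0} \<le> q ^ (nat (v (resultant f (pderiv f)) div 2) + 1)"
proof -
  note nv = assms(1)
  have cA: "\<And>i. coeff f i \<in> val_ring v" using assms(5) by blast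
  note mon = assms(6) and D0 = assms(7)
  define Z where "Z = {x. poly f x = 0}"
  have f0: "f \<noteq> 0" using mon by auto
  have finZ: "finite Z" unfolding Z_def using poly_roots_finite[OF f0] .
  have ZA: "x \<in> val_ring v" if "x \<in> Z" for x
    using root_in_A[OF nv cA mon] that unfolding Z_def by auto
  define m where "m = nat (v (resultant f (pderiv f)) div 2)"
  have DA: "resultant f (pderiv f) \<in> val_ring v" by (rule A_resultant[OF nv cA A_pderiv[OF nv cA]])
  then have vD: "0 \<le> v (resultant f (pderiv f))" using D0 unfolding val_ring_def by auto
  have close: "v (x - y) \<le> int m" if "x \<in> Z" "y \<in> Z" "x \<noteq> y" for x y
  proof -
    have "2 * v (x - y) \<le> v (resultant f (pderiv f))"
      using two_roots_bound[OF nv cA mon D0] that unfolding Z_def by auto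
    then have "(2 * v (x - y)) div 2 \<le> v (resultant f (pderiv f)) div 2" by (rule zdiv_mono1) simp
    then show ?thesis unfolding m_def using vD by simp
  qed
  obtain \<pi> where pi0: "\<pi> \<noteq> 0" and vpi: "v \<pi> = 1"
    using nv unfolding normalized_discrete_valuation_def by blast
  define rp where "rp y = (SOME z. z \<in> residue_rel v `` {y})" for y
  have rp: "rp y \<in> val_ring v \<and> (y = rp y \<or> 1 \<le> v (y - rp y))" if y: "y \<in> val_ring v" for y
  proof -
    have "y \<in> residue_rel v `` {y}" using y unfolding residue_rel_def by auto
    then have "rp y \<in> residue_rel v `` {y}" unfolding rp_def by (rule someI)
    then show ?thesis unfolding residue_rel_def by auto
  qed
  define Rs where "Rs = (\<lambda>C. SOME z. z \<in> C) ` residue_field v"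
  have rpR: "rp y \<in> Rs" if y: "y \<in> val_ring v" for y
  proof -
    have "residue_rel v `` {y} \<in> residue_field v"
      unfolding residue_field_def using y by (rule quotientI)
    then show ?thesis unfolding Rs_def rp_def by blast
  qed
  have finR: "finite Rs" unfolding Rs_def using assms(3) by simp
  have cardR: "card Rs \<le> q" unfolding Rs_def using assms(4) card_image_le[OF assms(3)] by simp
  define st where "st y = (y - rp y) / \<pi>" for y
  have stA: "st y \<in> val_ring v" if y: "y \<in> val_ring v" for y
  proof (cases "y = rp y")
    case True then show ?thesis unfolding st_def val_ring_def by simp
  next
    case False
    then have "1 \<le> v (y - rp y)" and "y - rp y \<noteq> 0" using rp[OF y] by auto
    then show ?thesis unfolding st_def val_ring_def using vdiv[OF nv _ pi0] vpi by simp
  qed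
  have stEq: "\<pi> * st y = y - rp y" for y unfolding st_def using pi0 by simp
  define s where "s x k = (st ^^ k) x" for x k
  have sA: "s x k \<in> val_ring v" if "x \<in> val_ring v" for x k
    unfolding s_def by (induct k) (use that stA in auto)
  have expand: "x = (\<Sum>k<t. rp (s x k) * \<pi> ^ k) + \<pi> ^ t * s x t" for x t
  proof (induct t)
    case 0 then show ?case by (simp add: s_def)
  next
    case (Suc t)
    have "s x (Suc t) = st (s x t)" unfolding s_def by simp
    then have "\<pi> ^ Suc t * s x (Suc t) = \<pi> ^ t * (\<pi> * st (s x t))"
      by (simp add: ac_simps)
    also have "\<dots> = \<pi> ^ t * (s x t - rp (s x t))" by (simp only: stEq)
    finally have "\<pi> ^ Suc t * s x (Suc t) = \<pi> ^ t * (s x t - rp (s x t))" .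
    then have "(\<Sum>k<Suc t. rp (s x k) * \<pi> ^ k) + \<pi> ^ Suc t * s x (Suc t)
      = (\<Sum>k<t. rp (s x k) * \<pi> ^ k) + (rp (s x t) * \<pi> ^ t + \<pi> ^ t * (s x t - rp (s x t)))"
      by (simp only: sum.lessThan_Suc add.assoc)
    also have "rp (s x t) * \<pi> ^ t + \<pi> ^ t * (s x t - rp (s x t)) = \<pi> ^ t * s x t"
      by (simp add: right_diff_distrib mult.commute)
    finally show ?case using Suc by simp
  qed
  define D where "D x = (\<lambda>k\<in>{..m}. rp (s x k))" for x
  have inj: "inj_on D Z"
  proof (rule inj_onI, rule ccontr)
    fix x y assume x: "x \<in> Z" and y: "y \<in> Z" and Dxy: "D x = D y" and ne: "x \<noteq> y"
    have dig: "rp (s x k) = rp (s y k)" if "k < Suc m" for k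
      using fun_cong[OF Dxy, of k] that unfolding D_def by auto
    have "(\<Sum>k<Suc m. rp (s x k) * \<pi> ^ k) = (\<Sum>k<Suc m. rp (s y k) * \<pi> ^ k)"
      by (rule sum.cong) (auto simp: dig)
    then have ey: "y = (\<Sum>k<Suc m. rp (s x k) * \<pi> ^ k) + \<pi> ^ Suc m * s y (Suc m)"
      using expand[of y "Suc m"] by simp
    have ex: "x = (\<Sum>k<Suc m. rp (s x k) * \<pi> ^ k) + \<pi> ^ Suc m * s x (Suc m)"
      by (rule expand)
    have eq: "x - y = \<pi> ^ Suc m * (s x (Suc m) - s y (Suc m))"
      using ex ey by (metis add_diff_cancel_left right_diff_distrib)
    define w where "w = s x (Suc m) - s y (Suc m)"
    have w0: "w \<noteq> 0" using eq ne unfolding w_def by auto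
    have wA: "w \<in> val_ring v" unfolding w_def using sA ZA x y A_diff[OF nv] by blast
    then have "0 \<le> v w" using w0 unfolding val_ring_def by auto
    moreover have "v (x - y) = int (Suc m) + v w"
      unfolding eq w_def[symmetric] using w0 pi0 by (simp add: vmult[OF nv] vpow[OF nv] vpi)
    ultimately show False using close[OF x y ne] by simp
  qed
  have sub: "D ` Z \<subseteq> PiE {..m} (\<lambda>_. Rs)"
  proof
    fix d assume "d \<in> D ` Z"
    then obtain x where x: "x \<in> Z" "d = D x" by auto
    show "d \<in> PiE {..m} (\<lambda>_. Rs)" unfolding x(2) D_def restrict_PiE_iff
      using rpR sA ZA x(1) by blast
  qed
  have "card Z = card (D ` Z)" by (rule card_image[OF inj, symmetric])
  also have "\<dots> \<le> card (PiE {..m} (\<lambda>_. Rs))"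
    by (rule card_mono[OF _ sub]) (simp add: finite_PiE finR)
  also have "\<dots> = card Rs ^ Suc m" by (simp add: card_PiE)
  also have "\<dots> \<le> q ^ Suc m" by (rule power_mono[OF cardR]) simp
  finally show ?thesis unfolding Z_def m_def by simp
qed


end
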